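(* Let $\ell\in\mathcal{D}^-[0,\infty)$, $r\in\mathcal{D}^+[0,\infty)$ with $\inf_{t\ge0}(r(t)-\ell(t))>0$, let $c_0,c_0'\in\mathbb{R}$ and $\psi,\psi'\in\mathcal{D}[0,\infty)$ with $\psi(0)=\psi'(0)$. Suppose $(\phi,\eta)$ and $(\phi',\eta')$ solve the SP on $[\ell(\cdot),r(\cdot)]$ for $c_0+\psi$ and $c_0'+\psi'$, respectively, with corresponding constraining processes $(\eta_\ell,\eta_r)$ and $(\eta_\ell',\eta_r')$. If there exists a non-decreasing function $\nu$ with $\nu(0)=0$ such that $\psi=\psi'+\nu$, then for each $t\ge0$: (1) $\eta_\ell(t)-[c_0'-c_0]^+\le\eta_\ell'(t)\le\eta_\ell(t)+\nu(t)+[c_0-c_0']^+$; (2) $\eta_r'(t)-[c_0'-c_0]^+\le\eta_r(t)\le\eta_r'(t)+\nu(t)+[c_0-c_0']^+$.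
   Context: $\mathcal{D}[0,\infty)$ denotes the càdlàg functions $[0,\infty)\to(-\infty,\infty)$; $\mathcal{D}^-[0,\infty)$ (resp. $\mathcal{D}^+[0,\infty)$) denotes càdlàg functions with values in $[-\infty,\infty)$ (resp. $(-\infty,\infty]$); $a^+=\max\{a,0\}$. SP: $(\phi,\eta)\in\mathcal{D}[0,\infty)^2$ solves the SP on $[\ell(\cdot),r(\cdot)]$ for $\psi$ if (1) $\phi(t)=\psi(t)+\eta(t)\in[\ell(t),r(t)]$ for all $t\ge0$; (2) $\eta=\eta_\ell-\eta_r$ with $\eta_\ell,\eta_r$ non-decreasing and $\int_0^\infty \mathbb{I}_{\{\phi(s)>\ell(s)\}}\,d\eta_\ell(s)=0$, $\int_0^\infty \mathbb{I}_{\{\phi(s)<r(s)\}}\,d\eta_r(s)=0$. The pair $(\eta_\ell,\eta_r)$ is called the pair of constraining processes associated with the SP. *)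

theory Defs
  imports "HOL-Analysis.Analysis"
begin

definition cadlag :: "(real \<Rightarrow> 'a::topological_space) \<Rightarrow> bool" where
  "cadlag f \<longleftrightarrow> (\<forall>t\<ge>0. continuous (at_right t) f) \<and>
                 (\<forall>t>0. \<exists>L. (f \<longlongrightarrow> L) (at_left t))"

definition D :: "(real \<Rightarrow> real) set" where
  "D = {f. cadlag f}"

definition D_minus :: "(real \<Rightarrow> ereal) set" where
  "D_minus = {f. cadlag f \<and> (\<forall>t\<ge>0. f t \<noteq> \<infinity>)}"

definition D_plus :: "(real \<Rightarrow> ereal) set" where
  "D_plus = {f. cadlag f \<and> (\<forall>t\<ge>0. f t \<noteq> -\<infinity>)}"

text \<open>Non-decreasing on [0,oo) with the convention f(0-) = 0, i.e. f(0) >= 0.\<close>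
definition nondecr0 :: "(real \<Rightarrow> real) \<Rightarrow> bool" where
  "nondecr0 f \<longleftrightarrow> 0 \<le> f 0 \<and> mono_on {0..} f"

text \<open>Lebesgue-Stieltjes measure d f on the real line, f extended by 0 to negative times
  (so that an atom of mass f(0) sits at 0).\<close>
definition LS_measure :: "(real \<Rightarrow> real) \<Rightarrow> real measure" where
  "LS_measure f = interval_measure (\<lambda>s. if s < 0 then 0 else f s)"

definition SP_sol ::
  "(real \<Rightarrow> ereal) \<Rightarrow> (real \<Rightarrow> ereal) \<Rightarrow> (real \<Rightarrow> real) \<Rightarrow> (real \<Rightarrow> real) \<Rightarrow> (real \<Rightarrow> real)
    \<Rightarrow> (real \<Rightarrow> real) \<Rightarrow> (real \<Rightarrow> real) \<Rightarrow> bool" where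
  "SP_sol l r psi phi eta etal etar \<longleftrightarrow>
     phi \<in> D \<and> eta \<in> D \<and>
     (\<forall>t\<ge>0. phi t = psi t + eta t \<and> l t \<le> ereal (phi t) \<and> ereal (phi t) \<le> r t) \<and>
     (\<forall>t\<ge>0. eta t = etal t - etar t) \<and>
     nondecr0 etal \<and> nondecr0 etar \<and> etal \<in> D \<and> etar \<in> D \<and>
     emeasure (LS_measure etal) {s. 0 \<le> s \<and> l s < ereal (phi s)} = 0 \<and>
     emeasure (LS_measure etar) {s. 0 \<le> s \<and> ereal (phi s) < r s} = 0"

end

theory Submission
  imports Defs
begin

lemma Icc_lim:
  fixes F :: "real \<Rightarrow> real"
  assumes mono: "\<And>x y. x \<le> y \<Longrightarrow> F x \<le> F y" and rc: "\<And>a. continuous (at_right a) F" and ab: "a \<le> b"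
  shows "(\<lambda>n. ennreal (F b - F (a - 1/Suc n))) \<longlonglongrightarrow> emeasure (interval_measure F) {a..b}"
proof -
  let ?A = "\<lambda>n::nat. {a - 1/Suc n <.. b}"
  have le: "a - 1/Suc n \<le> b" for n :: nat
    using ab by (smt (verit) of_nat_0_le_iff divide_nonneg_nonneg)
  have eq: "emeasure (interval_measure F) (?A n) = ennreal (F b - F (a - 1/Suc n))" for n
    by (rule emeasure_interval_measure_Ioc[OF le]) (auto intro: mono rc)
  have dec: "decseq ?A"
  proof (unfold decseq_def, intro allI impI)
    fix m n :: nat assume "m \<le> n"
    then have "1/real (Suc n) \<le> 1/real (Suc m)" by (intro divide_left_mono) auto
    then show "?A n \<subseteq> ?A m" by auto
  qed
  have "(\<lambda>n. emeasure (interval_measure F) (?A n)) \<longlonglongrightarrow> emeasure (interval_measure F) (\<Inter>n. ?A n)"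
    by (rule Lim_emeasure_decseq) (use dec eq in auto)
  moreover have "(\<Inter>n. ?A n) = {a..b}"
  proof (auto)
    fix x assume h: "\<forall>n. a - 1 / (1 + real n) < x"
    show "a \<le> x"
    proof (rule ccontr)
      assume "\<not> a \<le> x"
      then obtain n where "1 / (1 + real n) < a - x"
        by (metis diff_gt_0_iff_gt not_le_imp_less nat_approx_posE of_nat_Suc)
      with h show False by (smt (verit))
    qed
  next
    fix x assume "a \<le> x" then show "a - 1 / (1 + real n) < x" for n
      by (smt (verit) divide_pos_pos of_nat_less_0_iff)
  qed
  ultimately show ?thesis using eq by simp
qed

lemma KL:
  fixes F :: "real \<Rightarrow> real" and N :: "real set" and u z :: real
  assumes mono: "\<And>x y. x \<le> y \<Longrightarrow> F x \<le> F y" and rc: "\<And>a. continuous (at_right a) F"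
    and neg: "\<And>s. s < 0 \<Longrightarrow> F s = 0"
    and N0: "emeasure (interval_measure F) N = 0" and Nb: "N \<in> sets borel"
    and u: "0 \<le> u" and virt: "z \<le> F u"
    and hyp: "\<And>w. 0 \<le> w \<Longrightarrow> w \<le> u \<Longrightarrow> w \<notin> N \<Longrightarrow> z \<le> F u - F w"
  shows "z \<le> 0"
proof -
  let ?\<mu> = "interval_measure F"
  have zero: "emeasure ?\<mu> B = 0" if "B \<subseteq> N" for B
    using emeasure_mono[OF that] Nb N0 by (metis le_zero_eq sets_interval_measure)
  define S where "S = {w. 0 \<le> w \<and> w \<le> u \<and> w \<notin> N}"
  show ?thesis
  proof (cases "S = {}")
    case True
    then have "{0..u} \<subseteq> N" by (auto simp: S_def)
    hence m0: "emeasure ?\<mu> {0..u} = 0" by (rule zero)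
    have "(\<lambda>n. ennreal (F u - F (0 - 1/Suc n))) \<longlonglongrightarrow> emeasure ?\<mu> {0..u}" by (rule Icc_lim[OF mono rc u])
    moreover have "F (0 - 1/Suc n) = 0" for n :: nat by (rule neg) simp
    ultimately have "(\<lambda>n. ennreal (F u)) \<longlonglongrightarrow> 0" using m0 by simp
    hence "ennreal (F u) = 0" using LIMSEQ_const_iff by blast
    hence "F u \<le> 0" by (simp add: ennreal_eq_0_iff)
    with virt show ?thesis by simp
  next
    case False
    note Sne = False
    define \<sigma> where "\<sigma> = Sup S"
    have bdd: "bdd_above S" by (auto simp: S_def bdd_above_def)
    have \<sigma>S: "w \<in> S \<Longrightarrow> w \<le> \<sigma>" for w using cSup_upper[OF _ bdd] \<sigma>_def by auto
    obtain w0 where "w0 \<in> S" using False by auto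
    hence \<sigma>0: "0 \<le> \<sigma>" using \<sigma>S[of w0] by (auto simp: S_def)
    have \<sigma>u: "\<sigma> \<le> u" unfolding \<sigma>_def by (rule cSup_least[OF False]) (auto simp: S_def)
    have sub: "{\<sigma><..u} \<subseteq> N"
    proof
      fix w assume w: "w \<in> {\<sigma><..u}"
      show "w \<in> N"
      proof (rule ccontr)
        assume "w \<notin> N"
        then have "w \<in> S" using w \<sigma>0 by (auto simp: S_def)
        then show False using \<sigma>S w by force
      qed
    qed
    hence "emeasure ?\<mu> {\<sigma><..u} = 0" by (rule zero)
    moreover have "emeasure ?\<mu> {\<sigma><..u} = ennreal (F u - F \<sigma>)"
      by (rule emeasure_interval_measure_Ioc[OF \<sigma>u mono rc])
    ultimately have Fu\<sigma>: "F u \<le> F \<sigma>" by (simp add: ennreal_eq_0_iff)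
    show ?thesis
    proof (cases "\<sigma> \<in> S")
      case True then have "z \<le> F u - F \<sigma>" using hyp S_def by auto
      with Fu\<sigma> show ?thesis by simp
    next
      case False
      then have "\<sigma> \<in> N" using \<sigma>0 \<sigma>u S_def by auto
      have "{\<sigma>..u} \<subseteq> N"
      proof
        fix x assume "x \<in> {\<sigma>..u}"
        then show "x \<in> N" using sub \<open>\<sigma> \<in> N\<close> by (cases "x = \<sigma>") auto
      qed
      hence m0: "emeasure ?\<mu> {\<sigma>..u} = 0" by (rule zero)
      have lim: "(\<lambda>n. ennreal (F u - F (\<sigma> - 1/Suc n))) \<longlonglongrightarrow> 0"
        using Icc_lim[OF mono rc \<sigma>u] m0 by simp
      show ?thesis
      proof (rule ccontr)
        assume "\<not> z \<le> 0" hence zpos: "0 < z" by simp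
        have "eventually (\<lambda>n. ennreal (F u - F (\<sigma> - 1/Suc n)) < ennreal z) sequentially"
          using order_tendstoD(2)[OF lim] zpos by simp
        then obtain n where n: "ennreal (F u - F (\<sigma> - 1/Suc n)) < ennreal z"
          by (auto simp: eventually_sequentially)
        have "\<sigma> - 1/Suc n \<le> u" using \<sigma>u by (smt (verit) of_nat_0_le_iff divide_nonneg_nonneg)
        hence "F (\<sigma> - 1/Suc n) \<le> F u" using mono by auto
        hence lt: "F u - F (\<sigma> - 1/Suc n) < z" using n zpos by (simp add: ennreal_less_iff)
        have "\<sigma> - 1/Suc n < \<sigma>" by simp
        then obtain w where w: "w \<in> S" "\<sigma> - 1/Suc n < w"
          using less_cSup_iff[OF Sne bdd] \<sigma>_def by auto
        have "z \<le> F u - F w" using hyp w S_def by auto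
        moreover have "F (\<sigma> - 1/Suc n) \<le> F w" using mono w by auto
        ultimately show False using lt by simp
      qed
    qed
  qed
qed

lemma right_open_borel:
  fixes U :: "real set"
  assumes ro: "\<And>s. s \<in> U \<Longrightarrow> \<exists>e>0. {s..<s+e} \<subseteq> U"
  shows "U \<in> sets borel"
proof -
  define C where "C = U - interior U"
  have U: "U = interior U \<union> C" using interior_subset by (auto simp: C_def)
  have "\<forall>s\<in>C. \<exists>q. q \<in> \<rat> \<and> s < q \<and> {s<..<q} \<subseteq> interior U"
  proof
    fix s assume "s \<in> C"
    then obtain e where e: "e > 0" "{s..<s+e} \<subseteq> U" using ro by (auto simp: C_def)
    obtain q where q: "q \<in> \<rat>" "s < q" "q < s + e" using Rats_dense_in_real[of s "s+e"] e by auto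
    have "{s<..<q} \<subseteq> U" using e q by auto
    hence "{s<..<q} \<subseteq> interior U" by (rule interior_maximal) simp
    with q show "\<exists>q. q \<in> \<rat> \<and> s < q \<and> {s<..<q} \<subseteq> interior U" by blast
  qed
  then obtain f where f: "\<And>s. s \<in> C \<Longrightarrow> f s \<in> \<rat> \<and> s < f s \<and> {s<..<f s} \<subseteq> interior U"
    by metis
  have inj: "inj_on f C"
  proof (rule inj_onI)
    fix s s' assume s: "s \<in> C" "s' \<in> C" "f s = f s'"
    show "s = s'"
    proof (rule ccontr)
      assume "s \<noteq> s'"
      then consider "s < s'" | "s' < s" by linarith
      then show False
      proof cases
        case 1
        then have "s' \<in> {s<..<f s}" using f[OF s(2)] s(3) by auto
        then have "s' \<in> interior U" using f[OF s(1)] by auto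
        then show False using s(2) by (auto simp: C_def)
      next
        case 2
        then have "s \<in> {s'<..<f s'}" using f[OF s(1)] s(3) by auto
        then have "s \<in> interior U" using f[OF s(2)] by auto
        then show False using s(1) by (auto simp: C_def)
      qed
    qed
  qed
  have "f ` C \<subseteq> \<rat>" using f by auto
  hence "countable (f ` C)" using countable_rat countable_subset by blast
  hence cC: "countable C" using inj countable_image_inj_on by blast
  have "C \<in> sets borel"
    by (rule sets.countable[OF _ cC]) simp
  moreover have "interior U \<in> sets borel" by simp
  ultimately show ?thesis using U by (metis sets.Un)
qed


lemma half_step:
  fixes F1 F2 p q :: "real \<Rightarrow> real" and N1 N2 :: "real set" and T e :: real
  assumes m1: "\<And>x y. x \<le> y \<Longrightarrow> F1 x \<le> F1 y" and rc1: "\<And>a. continuous (at_right a) F1"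
    and n1: "\<And>s. s < 0 \<Longrightarrow> F1 s = 0"
    and m2: "\<And>x y. x \<le> y \<Longrightarrow> F2 x \<le> F2 y" and rc2: "\<And>a. continuous (at_right a) F2"
    and n2: "\<And>s. s < 0 \<Longrightarrow> F2 s = 0"
    and z1: "emeasure (interval_measure F1) N1 = 0" "N1 \<in> sets borel"
    and z2: "emeasure (interval_measure F2) N2 = 0" "N2 \<in> sets borel"
    and incp: "\<And>w u. 0 \<le> w \<Longrightarrow> w \<le> u \<Longrightarrow> p u - p w \<le> F1 u - F1 w"
    and incq: "\<And>w u. 0 \<le> w \<Longrightarrow> w \<le> u \<Longrightarrow> q u - q w \<le> F2 u - F2 w"
    and vp: "\<And>u. 0 \<le> u \<Longrightarrow> p u \<le> F1 u" and vq: "\<And>u. 0 \<le> u \<Longrightarrow> q u \<le> F2 u"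
    and cp: "\<And>s. 0 \<le> s \<Longrightarrow> s \<notin> N1 \<Longrightarrow> p s \<le> q s"
    and T: "0 \<le> T" and flat: "{T..<T+e} \<subseteq> N2"
    and before: "\<And>w. 0 \<le> w \<Longrightarrow> w < T \<Longrightarrow> p w \<le> 0 \<and> q w \<le> 0"
  shows "\<forall>u. T \<le> u \<and> u < T + e \<longrightarrow> p u \<le> 0 \<and> q u \<le> 0"
proof -
  have qb: "q u \<le> 0" if u: "0 \<le> u" "u < T+e" for u
  proof (cases "u < T")
    case True with before u show ?thesis by auto
  next
    case False
    show ?thesis
    proof (rule KL[OF m2 rc2 n2 z2 u(1) vq[OF u(1)]])
      fix w assume w: "0 \<le> w" "w \<le> u" "w \<notin> N2"
      have "w < T"
      proof (rule ccontr)
        assume "\<not> w < T"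
        then have "w \<in> {T..<T+e}" using w u by auto
        then show False using flat w by auto
      qed
      then have "q w \<le> 0" using before w by auto
      then show "q u \<le> F2 u - F2 w" using incq[OF w(1) w(2)] by simp
    qed
  qed
  have pb: "p u \<le> 0" if u: "0 \<le> u" "u < T+e" for u
  proof (rule KL[OF m1 rc1 n1 z1 u(1) vp[OF u(1)]])
    fix w assume w: "0 \<le> w" "w \<le> u" "w \<notin> N1"
    have "p w \<le> q w" using cp w by auto
    moreover have "q w \<le> 0" using qb[of w] w u by auto
    ultimately show "p u \<le> F1 u - F1 w" using incp[OF w(1) w(2)] by simp
  qed
  show ?thesis using pb qb T by auto
qed

lemma generic:
  fixes F1 F2 p q :: "real \<Rightarrow> real" and N1 N2 :: "real set"
  assumes m1: "\<And>x y. x \<le> y \<Longrightarrow> F1 x \<le> F1 y" and rc1: "\<And>a. continuous (at_right a) F1"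
    and n1: "\<And>s. s < 0 \<Longrightarrow> F1 s = 0"
    and m2: "\<And>x y. x \<le> y \<Longrightarrow> F2 x \<le> F2 y" and rc2: "\<And>a. continuous (at_right a) F2"
    and n2: "\<And>s. s < 0 \<Longrightarrow> F2 s = 0"
    and z1: "emeasure (interval_measure F1) N1 = 0" "N1 \<in> sets borel"
    and z2: "emeasure (interval_measure F2) N2 = 0" "N2 \<in> sets borel"
    and ro1: "\<And>s. s \<in> N1 \<Longrightarrow> \<exists>e>0. {s..<s+e} \<subseteq> N1"
    and ro2: "\<And>s. s \<in> N2 \<Longrightarrow> \<exists>e>0. {s..<s+e} \<subseteq> N2"
    and cover: "\<And>t. 0 \<le> t \<Longrightarrow> t \<in> N1 \<or> t \<in> N2"
    and incp: "\<And>w u. 0 \<le> w \<Longrightarrow> w \<le> u \<Longrightarrow> p u - p w \<le> F1 u - F1 w"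
    and incq: "\<And>w u. 0 \<le> w \<Longrightarrow> w \<le> u \<Longrightarrow> q u - q w \<le> F2 u - F2 w"
    and vp: "\<And>u. 0 \<le> u \<Longrightarrow> p u \<le> F1 u" and vq: "\<And>u. 0 \<le> u \<Longrightarrow> q u \<le> F2 u"
    and cp: "\<And>s. 0 \<le> s \<Longrightarrow> s \<notin> N1 \<Longrightarrow> p s \<le> q s"
    and cq: "\<And>s. 0 \<le> s \<Longrightarrow> s \<notin> N2 \<Longrightarrow> q s \<le> p s"
  shows "\<forall>u\<ge>0. p u \<le> 0 \<and> q u \<le> 0"
proof (rule ccontr)
  assume neg: "\<not> (\<forall>u\<ge>0. p u \<le> 0 \<and> q u \<le> 0)"
  define B where "B = {u. 0 \<le> u \<and> \<not> (p u \<le> 0 \<and> q u \<le> 0)}"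
  have Bne: "B \<noteq> {}" using neg by (auto simp: B_def)
  define T where "T = Inf B"
  have bdd: "bdd_below B" by (auto simp: B_def bdd_below_def)
  have T0: "0 \<le> T" unfolding T_def by (rule cInf_greatest[OF Bne]) (auto simp: B_def)
  have before: "p w \<le> 0 \<and> q w \<le> 0" if "0 \<le> w" "w < T" for w
  proof (rule ccontr)
    assume "\<not> (p w \<le> 0 \<and> q w \<le> 0)"
    then have "w \<in> B" using that by (auto simp: B_def)
    then have "T \<le> w" unfolding T_def using bdd by (rule cInf_lower)
    then show False using that by simp
  qed
  obtain e where e: "e > 0" "{T..<T+e} \<subseteq> N1 \<or> {T..<T+e} \<subseteq> N2"
    using cover[OF T0] ro1 ro2 by blast
  have good: "\<forall>u. T \<le> u \<and> u < T + e \<longrightarrow> p u \<le> 0 \<and> q u \<le> 0"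
    using e(2)
  proof
    assume "{T..<T+e} \<subseteq> N1"
    from half_step[OF m2 rc2 n2 m1 rc1 n1 z2 z1 incq incp vq vp cq T0 this] before
    show ?thesis by blast
  next
    assume "{T..<T+e} \<subseteq> N2"
    from half_step[OF m1 rc1 n1 m2 rc2 n2 z1 z2 incp incq vp vq cp T0 this] before
    show ?thesis by blast
  qed
  have "T < T + e" using e by simp
  then obtain u where u: "u \<in> B" "u < T + e" using cInf_less_iff[OF Bne bdd, of "T+e"] unfolding T_def[symmetric] by blast
  have "T \<le> u" unfolding T_def using u(1) bdd by (rule cInf_lower)
  then show False using good u by (auto simp: B_def)
qed

lemma Fe_props:
  fixes f :: "real \<Rightarrow> real"
  assumes nd: "nondecr0 f" and fD: "f \<in> D"
  shows "\<And>x y. x \<le> y \<Longrightarrow> (\<lambda>s. if s < 0 then 0 else f s) x \<le> (\<lambda>s. if s < 0 then 0 else f s) y"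
    and "\<And>a. continuous (at_right a) (\<lambda>s. if s < 0 then 0 else f s)"
    and "\<And>s. s < 0 \<Longrightarrow> (\<lambda>s. if s < 0 then 0 else f s) s = 0"
proof -
  let ?G = "\<lambda>s. if s < 0 then 0 else f s"
  have f0: "0 \<le> f 0" and mo: "mono_on {0..} f" using nd by (auto simp: nondecr0_def)
  show "?G x \<le> ?G y" if "x \<le> y" for x y
  proof -
    consider "y < 0" | "x < 0" "0 \<le> y" | "0 \<le> x" using that by linarith
    then show ?thesis
    proof cases
      case 2 then show ?thesis using f0 mono_onD[OF mo, of 0 y] by auto
    next
      case 3 then show ?thesis using mono_onD[OF mo, of x y] that by auto
    qed (use that in auto)
  qed
  show "continuous (at_right a) ?G" for a
  proof (cases "a < 0")
    case True
    have "eventually (\<lambda>x. x < 0) (at_right a)"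
      unfolding eventually_at_right_field using True by (intro exI[of _ 0]) auto
    then have "eventually (\<lambda>x. ?G x = ?G a) (at_right a)"
      by eventually_elim (use True in auto)
    then show ?thesis unfolding continuous_within by (rule tendsto_eventually)
  next
    case False
    have c: "continuous (at_right a) f" using fD False by (auto simp: D_def cadlag_def)
    have ev: "eventually (\<lambda>x. ?G x = f x) (at_right a)"
      using eventually_at_right_less[of a] by eventually_elim (use False in auto)
    have "(f \<longlongrightarrow> f a) (at_right a)" using c unfolding continuous_within .
    then have "(?G \<longlongrightarrow> f a) (at_right a)" using tendsto_cong[OF ev] by simp
    then show ?thesis unfolding continuous_within using False by simp
  qed
  show "\<And>s. s < 0 \<Longrightarrow> ?G s = 0" by simp
qed

lemma ro_lt:
  fixes f g :: "real \<Rightarrow> ereal"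
  assumes cf: "\<And>s. 0 \<le> s \<Longrightarrow> continuous (at_right s) f"
    and cg: "\<And>s. 0 \<le> s \<Longrightarrow> continuous (at_right s) g"
    and s: "s \<in> {s. 0 \<le> s \<and> f s < g s}"
  shows "\<exists>e>0. {s..<s+e} \<subseteq> {s. 0 \<le> s \<and> f s < g s}"
proof -
  have s0: "0 \<le> s" and lt: "f s < g s" using s by auto
  obtain c where c: "f s < c" "c < g s" using dense[OF lt] by auto
  have "eventually (\<lambda>x. f x < c) (at_right s)"
    using cf[OF s0] c(1) unfolding continuous_within by (rule order_tendstoD(2))
  moreover have "eventually (\<lambda>x. c < g x) (at_right s)"
    using cg[OF s0] c(2) unfolding continuous_within by (rule order_tendstoD(1))
  ultimately have "eventually (\<lambda>x. f x < g x) (at_right s)"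
    by eventually_elim auto
  then obtain b where b: "b > s" "\<And>y. s < y \<Longrightarrow> y < b \<Longrightarrow> f y < g y"
    unfolding eventually_at_right_field by auto
  show ?thesis
  proof (intro exI[of _ "b - s"] conjI)
    show "b - s > 0" using b by simp
    show "{s..<s + (b - s)} \<subseteq> {s. 0 \<le> s \<and> f s < g s}"
    proof
      fix y assume y: "y \<in> {s..<s + (b - s)}"
      show "y \<in> {s. 0 \<le> s \<and> f s < g s}"
      proof (cases "y = s")
        case True then show ?thesis using s by simp
      next
        case False then show ?thesis using y b s0 by auto
      qed
    qed
  qed
qed

lemma ereal_rc: "continuous (at_right t) f \<Longrightarrow> continuous (at_right t) (\<lambda>s. ereal (f s))"
  unfolding continuous_within by (rule tendsto_ereal)


lemma sol_facts:
  fixes l r :: "real \<Rightarrow> ereal" and psi phi eta etal etar :: "real \<Rightarrow> real"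
  assumes sol: "SP_sol l r psi phi eta etal etar" and lD: "l \<in> D_minus" and rD: "r \<in> D_plus"
    and lr: "\<And>t. 0 \<le> t \<Longrightarrow> l t < r t"
  shows "emeasure (interval_measure (\<lambda>s. if s < 0 then 0 else etal s)) {s. 0 \<le> s \<and> l s < ereal (phi s)} = 0"
    and "emeasure (interval_measure (\<lambda>s. if s < 0 then 0 else etar s)) {s. 0 \<le> s \<and> ereal (phi s) < r s} = 0"
    and "{s. 0 \<le> s \<and> l s < ereal (phi s)} \<in> sets borel"
    and "{s. 0 \<le> s \<and> ereal (phi s) < r s} \<in> sets borel"
    and "\<And>s. s \<in> {s. 0 \<le> s \<and> l s < ereal (phi s)} \<Longrightarrow> \<exists>e>0. {s..<s+e} \<subseteq> {s. 0 \<le> s \<and> l s < ereal (phi s)}"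
    and "\<And>s. s \<in> {s. 0 \<le> s \<and> ereal (phi s) < r s} \<Longrightarrow> \<exists>e>0. {s..<s+e} \<subseteq> {s. 0 \<le> s \<and> ereal (phi s) < r s}"
    and "\<And>t. 0 \<le> t \<Longrightarrow> t \<in> {s. 0 \<le> s \<and> l s < ereal (phi s)} \<or> t \<in> {s. 0 \<le> s \<and> ereal (phi s) < r s}"
proof -
  show "emeasure (interval_measure (\<lambda>s. if s < 0 then 0 else etal s)) {s. 0 \<le> s \<and> l s < ereal (phi s)} = 0"
    "emeasure (interval_measure (\<lambda>s. if s < 0 then 0 else etar s)) {s. 0 \<le> s \<and> ereal (phi s) < r s} = 0"
    using sol unfolding SP_sol_def LS_measure_def by auto
  have cl: "\<And>s. 0 \<le> s \<Longrightarrow> continuous (at_right s) l" using lD by (auto simp: D_minus_def cadlag_def)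
  have cr: "\<And>s. 0 \<le> s \<Longrightarrow> continuous (at_right s) r" using rD by (auto simp: D_plus_def cadlag_def)
  have cp: "\<And>s. 0 \<le> s \<Longrightarrow> continuous (at_right s) (\<lambda>s. ereal (phi s))"
    using sol by (auto simp: SP_sol_def D_def cadlag_def intro!: ereal_rc)
  show ro1: "\<And>s. s \<in> {s. 0 \<le> s \<and> l s < ereal (phi s)} \<Longrightarrow> \<exists>e>0. {s..<s+e} \<subseteq> {s. 0 \<le> s \<and> l s < ereal (phi s)}"
    by (rule ro_lt[OF cl cp])
  show ro2: "\<And>s. s \<in> {s. 0 \<le> s \<and> ereal (phi s) < r s} \<Longrightarrow> \<exists>e>0. {s..<s+e} \<subseteq> {s. 0 \<le> s \<and> ereal (phi s) < r s}"
    by (rule ro_lt[OF cp cr])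
  show "{s. 0 \<le> s \<and> l s < ereal (phi s)} \<in> sets borel" by (rule right_open_borel[OF ro1])
  show "{s. 0 \<le> s \<and> ereal (phi s) < r s} \<in> sets borel" by (rule right_open_borel[OF ro2])
  fix t :: real assume t: "0 \<le> t"
  have b: "l t \<le> ereal (phi t)" "ereal (phi t) \<le> r t" using sol t by (auto simp: SP_sol_def)
  show "t \<in> {s. 0 \<le> s \<and> l s < ereal (phi s)} \<or> t \<in> {s. 0 \<le> s \<and> ereal (phi s) < r s}"
  proof (cases "l t < ereal (phi t)")
    case True then show ?thesis using t by simp
  next
    case False
    then have "ereal (phi t) < r t" using lr[OF t] b by (meson not_less order_le_less_trans)
    then show ?thesis using t by simp
  qed
qed

theorem proposition3p5:
  fixes l r :: "real \<Rightarrow> ereal"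
    and c0 c0' :: real
    and psi psi' phi eta etal etar phi' eta' etal' etar' nu :: "real \<Rightarrow> real"
  assumes "l \<in> D_minus" and "r \<in> D_plus"
    and "(INF t\<in>{0..}. r t - l t) > 0"
    and "psi \<in> D" and "psi' \<in> D" and "psi 0 = psi' 0"
    and "SP_sol l r (\<lambda>t. c0 + psi t) phi eta etal etar"
    and "SP_sol l r (\<lambda>t. c0' + psi' t) phi' eta' etal' etar'"
    and "mono_on {0..} nu" and "nu 0 = 0"
    and "\<forall>t\<ge>0. psi t = psi' t + nu t"
  shows "\<forall>t\<ge>0.
     (etal t - max (c0' - c0) 0 \<le> etal' t \<and> etal' t \<le> etal t + nu t + max (c0 - c0') 0) \<and>
     (etar' t - max (c0' - c0) 0 \<le> etar t \<and> etar t \<le> etar' t + nu t + max (c0 - c0') 0)"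
proof -
  define x where "x = max (c0 - c0') 0"
  define y where "y = max (c0' - c0) 0"
  have lr: "l t < r t" if "0 \<le> t" for t
  proof -
    have "(INF t\<in>{0..}. r t - l t) \<le> r t - l t" using that by (intro INF_lower) auto
    with assms(3) have "0 < r t - l t" by simp
    moreover have "l t \<noteq> \<infinity>" "r t \<noteq> -\<infinity>" using assms(1,2) that by (auto simp: D_minus_def D_plus_def)
    ultimately show ?thesis by (cases "l t"; cases "r t") auto
  qed
  note f1 = sol_facts[OF assms(7) assms(1) assms(2) lr]
  note f2 = sol_facts[OF assms(8) assms(1) assms(2) lr]
  have s1: "nondecr0 etal" "nondecr0 etar" "etal \<in> D" "etar \<in> D"
    and e1: "\<And>t. 0 \<le> t \<Longrightarrow> phi t = c0 + psi t + (etal t - etar t) \<and> l t \<le> ereal (phi t) \<and> ereal (phi t) \<le> r t"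
    using assms(7) unfolding SP_sol_def by auto
  have s2: "nondecr0 etal'" "nondecr0 etar'" "etal' \<in> D" "etar' \<in> D"
    and e2: "\<And>t. 0 \<le> t \<Longrightarrow> phi' t = c0' + psi' t + (etal' t - etar' t) \<and> l t \<le> ereal (phi' t) \<and> ereal (phi' t) \<le> r t"
    using assms(8) unfolding SP_sol_def by auto
  have md: "\<And>w u. 0 \<le> w \<Longrightarrow> w \<le> u \<Longrightarrow> f w \<le> f u" "\<And>u. 0 \<le> u \<Longrightarrow> 0 \<le> f u"
    if "nondecr0 f" for f :: "real \<Rightarrow> real"
  proof -
    show "\<And>w u. 0 \<le> w \<Longrightarrow> w \<le> u \<Longrightarrow> f w \<le> f u" using that
      by (auto simp: nondecr0_def intro: mono_onD)
    then show "\<And>u. 0 \<le> u \<Longrightarrow> 0 \<le> f u" using that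
      by (smt (verit) nondecr0_def)
  qed
  have mnu: "\<And>w u. 0 \<le> w \<Longrightarrow> w \<le> u \<Longrightarrow> nu w \<le> nu u" using assms(9) by (auto intro: mono_onD)
  have pnu: "\<And>u. 0 \<le> u \<Longrightarrow> 0 \<le> nu u" using mnu[of 0] assms(10) by fastforce
  note m1 = md[OF s1(1)] and m2 = md[OF s1(2)] and m3 = md[OF s2(1)] and m4 = md[OF s2(2)]
  have x0: "0 \<le> x" "0 \<le> y" "x - y = c0 - c0'" unfolding x_def y_def by auto
  note Fl = Fe_props[OF s1(1) s1(3)] and Fr = Fe_props[OF s1(2) s1(4)]
  note Fl' = Fe_props[OF s2(1) s2(3)] and Fr' = Fe_props[OF s2(2) s2(4)]
  have A: "\<forall>u\<ge>0. (\<lambda>s. etal' s - etal s - nu s - x) u \<le> 0 \<and> (\<lambda>s. etar' s - etar s - y) u \<le> 0"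
  proof (rule generic[OF Fl'(1) Fl'(2) Fl'(3) Fr'(1) Fr'(2) Fr'(3) f2(1) f2(3) f2(2) f2(4) f2(5) f2(6) f2(7)])
    fix w u :: real assume "0 \<le> w" "w \<le> u"
    then show "etal' u - etal u - nu u - x - (etal' w - etal w - nu w - x)
      \<le> (if u < 0 then 0 else etal' u) - (if w < 0 then 0 else etal' w)"
      "etar' u - etar u - y - (etar' w - etar w - y)
      \<le> (if u < 0 then 0 else etar' u) - (if w < 0 then 0 else etar' w)"
      using m1(1)[of w u] m2(1)[of w u] mnu[of w u] by auto
  next
    fix u :: real assume "0 \<le> u"
    then show "etal' u - etal u - nu u - x \<le> (if u < 0 then 0 else etal' u)"
      "etar' u - etar u - y \<le> (if u < 0 then 0 else etar' u)"
      using m1(2)[of u] m2(2)[of u] pnu[of u] x0 by auto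
  next
    fix s :: real assume s: "0 \<le> s" "s \<notin> {s. 0 \<le> s \<and> l s < ereal (phi' s)}"
    then have "ereal (phi' s) \<le> l s" by (simp add: not_less)
    then have "ereal (phi' s) \<le> ereal (phi s)" using e1[OF s(1)] by (meson order_trans)
    then have "phi' s \<le> phi s" by simp
    then show "etal' s - etal s - nu s - x \<le> etar' s - etar s - y"
      using e1[OF s(1)] e2[OF s(1)] assms(11) s(1) x0 by auto
  next
    fix s :: real assume s: "0 \<le> s" "s \<notin> {s. 0 \<le> s \<and> ereal (phi' s) < r s}"
    then have "r s \<le> ereal (phi' s)" by (simp add: not_less)
    then have "ereal (phi s) \<le> ereal (phi' s)" using e1[OF s(1)] by (meson order_trans)
    then have "phi s \<le> phi' s" by simp
    then show "etar' s - etar s - y \<le> etal' s - etal s - nu s - x"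
      using e1[OF s(1)] e2[OF s(1)] assms(11) s(1) x0 by auto
  qed
  have B: "\<forall>u\<ge>0. (\<lambda>s. etal s - etal' s - y) u \<le> 0 \<and> (\<lambda>s. etar s - etar' s - nu s - x) u \<le> 0"
  proof (rule generic[OF Fl(1) Fl(2) Fl(3) Fr(1) Fr(2) Fr(3) f1(1) f1(3) f1(2) f1(4) f1(5) f1(6) f1(7)])
    fix w u :: real assume "0 \<le> w" "w \<le> u"
    then show "etal u - etal' u - y - (etal w - etal' w - y)
      \<le> (if u < 0 then 0 else etal u) - (if w < 0 then 0 else etal w)"
      "etar u - etar' u - nu u - x - (etar w - etar' w - nu w - x)
      \<le> (if u < 0 then 0 else etar u) - (if w < 0 then 0 else etar w)"
      using m3(1)[of w u] m4(1)[of w u] mnu[of w u] by auto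
  next
    fix u :: real assume "0 \<le> u"
    then show "etal u - etal' u - y \<le> (if u < 0 then 0 else etal u)"
      "etar u - etar' u - nu u - x \<le> (if u < 0 then 0 else etar u)"
      using m3(2)[of u] m4(2)[of u] pnu[of u] x0 by auto
  next
    fix s :: real assume s: "0 \<le> s" "s \<notin> {s. 0 \<le> s \<and> l s < ereal (phi s)}"
    then have "ereal (phi s) \<le> l s" by (simp add: not_less)
    then have "ereal (phi s) \<le> ereal (phi' s)" using e2[OF s(1)] by (meson order_trans)
    then have "phi s \<le> phi' s" by simp
    then show "etal s - etal' s - y \<le> etar s - etar' s - nu s - x"
      using e1[OF s(1)] e2[OF s(1)] assms(11) s(1) x0 by auto
  next
    fix s :: real assume s: "0 \<le> s" "s \<notin> {s. 0 \<le> s \<and> ereal (phi s) < r s}"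
    then have "r s \<le> ereal (phi s)" by (simp add: not_less)
    then have "ereal (phi' s) \<le> ereal (phi s)" using e2[OF s(1)] by (meson order_trans)
    then have "phi' s \<le> phi s" by simp
    then show "etar s - etar' s - nu s - x \<le> etal s - etal' s - y"
      using e1[OF s(1)] e2[OF s(1)] assms(11) s(1) x0 by auto
  qed
  show ?thesis using A B unfolding x_def y_def by auto
qed

end
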